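(* Let $d=r=1$, assume (A1), and let $(\rho_n,h_n,\varepsilon_n)$ be positive numbers tending to $0$ with $T/h_n$ integers. Then there exists $c>0$ such that, for all $n$ large enough, all $\mu\in C([0,T];\mathcal{P}_1(\mathbb{R}))$, all $i,j\in\mathbb{Z}$ and all $k=0,\dots,N_n-1$ (with $N_n=T/h_n$): $\min\big\{|\Phi^{+}_{i,k}[\mu]-\Phi^{+}_{j,k}[\mu]|^2,\ |\Phi^{-}_{i,k}[\mu]-\Phi^{-}_{j,k}[\mu]|^2\big\}\ge(1-ch_n)|x_i-x_j|^2$, and consequently $\frac12\sum_{j\in\mathbb{Z}}\big[\beta_i(\Phi^{+}_{j,k}[\mu])+\beta_i(\Phi^{-}_{j,k}[\mu])\big]\le1+ch_n$ for all $i\in\mathbb{Z}$, $k=0,\dots,N_n-1$, where all objects are computed with parameters $(\rho,h,\varepsilon)=(\rho_n,h_n,\varepsilon_n)$.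
   Context: $\mathcal{P}_1(\mathbb{R})$: probability measures with finite first moment, 1-Wasserstein distance. Assumption (A1) (for $d=r=1$): $F,G:\mathbb{R}\times\mathcal{P}_1\to\mathbb{R}$ uniformly bounded, $F(\cdot,m),G(\cdot,m)\in C^2$ with first and second derivatives bounded uniformly in $x,m$; $\sigma:[0,T]\to\mathbb{R}$ continuous; $m_0$ absolutely continuous with bounded compactly supported density. Grid $x_i=i\rho$, $t_k=kh$; $\beta_i$ is the piecewise affine hat function with $\beta_i(x_j)=\delta_{ij}$; $I[f]=\sum_if_i\beta_i$. Discrete HJB: $v_{i,N}=G(x_i,\mu(T))$, $v_{i,k}=\inf_{\alpha\in\mathbb{R}}\big[\frac12(I[v_{\cdot,k+1}](x_i-h\alpha+\sqrt h\sigma(t_k))+I[v_{\cdot,k+1}](x_i-h\alpha-\sqrt h\sigma(t_k)))+\frac12h\alpha^2+hF(x_i,\mu(t_k))\big]$; $v_{\rho,h}[\mu](x,t)=I[v_{\cdot,[t/h]}](x)$; $v^\varepsilon_{\rho,h}[\mu](\cdot,t)=\phi_\varepsilon*v_{\rho,h}[\mu](\cdot,t)$ with $\phi_\varepsilon=\varepsilon^{-1}\phi(\cdot/\varepsilon)$ for a fixed $\phi\in C_c^\infty(\mathbb{R})$, $\phi\ge0$, $\int\phi=1$. $\Phi^{\pm}_{i,k}[\mu]=x_i-h\,Dv^\varepsilon_{\rho,h}[\mu](x_i,t_k)\pm\sqrt h\,\sigma(t_k)$. *)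

theory Defs
  imports "HOL-Analysis.Analysis" "HOL-Probability.Probability"
begin

definition P1 :: "real measure \<Rightarrow> bool" where
  "P1 m \<longleftrightarrow> prob_space m \<and> sets m = sets borel \<and> integrable m (\<lambda>x. \<bar>x\<bar>)"

definition couplings :: "real measure \<Rightarrow> real measure \<Rightarrow> (real \<times> real) measure set" where
  "couplings m n = {\<gamma>. prob_space \<gamma> \<and> sets \<gamma> = sets (borel \<Otimes>\<^sub>M borel) \<and>
      distr \<gamma> borel fst = m \<and> distr \<gamma> borel snd = n}"

definition W1 :: "real measure \<Rightarrow> real measure \<Rightarrow> real" where
  "W1 m n = (INF \<gamma>\<in>couplings m n. \<integral>p. \<bar>fst p - snd p\<bar> \<partial>\<gamma>)"

definition cont_P1_path :: "real \<Rightarrow> (real \<Rightarrow> real measure) \<Rightarrow> bool" where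
  "cont_P1_path T \<mu> \<longleftrightarrow> (\<forall>t\<in>{0..T}. P1 (\<mu> t)) \<and>
     (\<forall>t\<in>{0..T}. \<forall>e>0. \<exists>d>0. \<forall>s\<in>{0..T}. \<bar>s - t\<bar> < d \<longrightarrow> W1 (\<mu> s) (\<mu> t) < e)"

definition A1_coeff :: "(real \<Rightarrow> real measure \<Rightarrow> real) \<Rightarrow> bool" where
  "A1_coeff F \<longleftrightarrow> (\<exists>C. \<forall>m. P1 m \<longrightarrow> (\<forall>x.
      \<bar>F x m\<bar> \<le> C \<and>
      (\<lambda>y. F y m) differentiable (at x) \<and>
      deriv (\<lambda>y. F y m) differentiable (at x) \<and>
      isCont (deriv (deriv (\<lambda>y. F y m))) x \<and>
      \<bar>deriv (\<lambda>y. F y m) x\<bar> \<le> C \<and>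
      \<bar>deriv (deriv (\<lambda>y. F y m)) x\<bar> \<le> C))"

definition hat :: "real \<Rightarrow> int \<Rightarrow> real \<Rightarrow> real" where
  "hat \<rho> i x = max 0 (1 - \<bar>x - real_of_int i * \<rho>\<bar> / \<rho>)"

definition interp :: "real \<Rightarrow> (int \<Rightarrow> real) \<Rightarrow> real \<Rightarrow> real" where
  "interp \<rho> f x = infsum (\<lambda>i. f i * hat \<rho> i x) UNIV"

text \<open>vback ... N m i = v_{i, N-m}\<close>
fun vback :: "real \<Rightarrow> real \<Rightarrow> (real \<Rightarrow> real) \<Rightarrow> (real \<Rightarrow> real measure \<Rightarrow> real) \<Rightarrow>
   (real \<Rightarrow> real measure \<Rightarrow> real) \<Rightarrow> (real \<Rightarrow> real measure) \<Rightarrow> nat \<Rightarrow> nat \<Rightarrow> int \<Rightarrow> real" where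
  "vback \<rho> h \<sigma> F G \<mu> N 0 i = G (real_of_int i * \<rho>) (\<mu> (real N * h))"
| "vback \<rho> h \<sigma> F G \<mu> N (Suc m) i =
     (let x = real_of_int i * \<rho>; t = real (N - Suc m) * h;
          w = interp \<rho> (vback \<rho> h \<sigma> F G \<mu> N m)
      in (INF \<alpha>::real. (w (x - h * \<alpha> + sqrt h * \<sigma> t) + w (x - h * \<alpha> - sqrt h * \<sigma> t)) / 2
                       + h * \<alpha>\<^sup>2 / 2 + h * F x (\<mu> t)))"

definition vgrid :: "real \<Rightarrow> real \<Rightarrow> (real \<Rightarrow> real) \<Rightarrow> (real \<Rightarrow> real measure \<Rightarrow> real) \<Rightarrow>
   (real \<Rightarrow> real measure \<Rightarrow> real) \<Rightarrow> (real \<Rightarrow> real measure) \<Rightarrow> nat \<Rightarrow> nat \<Rightarrow> int \<Rightarrow> real" where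
  "vgrid \<rho> h \<sigma> F G \<mu> N k i = vback \<rho> h \<sigma> F G \<mu> N (N - k) i"

definition vrh :: "real \<Rightarrow> real \<Rightarrow> (real \<Rightarrow> real) \<Rightarrow> (real \<Rightarrow> real measure \<Rightarrow> real) \<Rightarrow>
   (real \<Rightarrow> real measure \<Rightarrow> real) \<Rightarrow> (real \<Rightarrow> real measure) \<Rightarrow> nat \<Rightarrow> real \<Rightarrow> real \<Rightarrow> real" where
  "vrh \<rho> h \<sigma> F G \<mu> N x t = interp \<rho> (vgrid \<rho> h \<sigma> F G \<mu> N (nat \<lfloor>t / h\<rfloor>)) x"

definition mollifier :: "(real \<Rightarrow> real) \<Rightarrow> bool" where
  "mollifier \<phi> \<longleftrightarrow> (\<forall>n x. ((deriv ^^ n) \<phi>) differentiable (at x)) \<and>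
     (\<exists>R. \<forall>x. \<bar>x\<bar> > R \<longrightarrow> \<phi> x = 0) \<and> (\<forall>x. \<phi> x \<ge> 0) \<and>
     integrable lborel \<phi> \<and> integral\<^sup>L lborel \<phi> = 1"

definition phi_eps :: "(real \<Rightarrow> real) \<Rightarrow> real \<Rightarrow> real \<Rightarrow> real" where
  "phi_eps \<phi> \<epsilon> x = \<phi> (x / \<epsilon>) / \<epsilon>"

definition veps :: "(real \<Rightarrow> real) \<Rightarrow> real \<Rightarrow> real \<Rightarrow> real \<Rightarrow> (real \<Rightarrow> real) \<Rightarrow>
   (real \<Rightarrow> real measure \<Rightarrow> real) \<Rightarrow> (real \<Rightarrow> real measure \<Rightarrow> real) \<Rightarrow> (real \<Rightarrow> real measure) \<Rightarrow>
   nat \<Rightarrow> real \<Rightarrow> real \<Rightarrow> real" where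
  "veps \<phi> \<epsilon> \<rho> h \<sigma> F G \<mu> N x t =
     (\<integral>y. phi_eps \<phi> \<epsilon> (x - y) * vrh \<rho> h \<sigma> F G \<mu> N y t \<partial>lborel)"

text \<open>Phi^{+-}_{i,k}[mu] = x_i - h Dv^eps(x_i,t_k) +- sqrt h sigma(t_k); s = 1 or s = -1\<close>
definition Phi :: "real \<Rightarrow> (real \<Rightarrow> real) \<Rightarrow> real \<Rightarrow> real \<Rightarrow> real \<Rightarrow> (real \<Rightarrow> real) \<Rightarrow>
   (real \<Rightarrow> real measure \<Rightarrow> real) \<Rightarrow> (real \<Rightarrow> real measure \<Rightarrow> real) \<Rightarrow> (real \<Rightarrow> real measure) \<Rightarrow>
   nat \<Rightarrow> int \<Rightarrow> nat \<Rightarrow> real" where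
  "Phi s \<phi> \<epsilon> \<rho> h \<sigma> F G \<mu> N i k =
     real_of_int i * \<rho>
     - h * deriv (\<lambda>x. veps \<phi> \<epsilon> \<rho> h \<sigma> F G \<mu> N x (real k * h)) (real_of_int i * \<rho>)
     + s * sqrt h * \<sigma> (real k * h)"

end

theory Submission
  imports Defs
begin


lemma interp_sum:
  assumes "finite S" "\<And>q. q \<notin> S \<Longrightarrow> hat \<rho> q x = 0"
  shows "interp \<rho> f x = (\<Sum>q\<in>S. f q * hat \<rho> q x)"
proof -
  have "interp \<rho> f x = infsum (\<lambda>q. f q * hat \<rho> q x) S"
    unfolding interp_def by (rule infsum_cong_neutral) (use assms in auto)
  then show ?thesis using assms by simp
qed

lemma hat_alt: "\<rho> > 0 \<Longrightarrow> hat \<rho> q x = max 0 (1 - \<bar>x/\<rho> - real_of_int q\<bar>)"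
proof -
  assume r: "\<rho> > 0"
  have "\<bar>x - real_of_int q * \<rho>\<bar> / \<rho> = \<bar>(x - real_of_int q * \<rho>) / \<rho>\<bar>" using r by simp
  also have "(x - real_of_int q * \<rho>) / \<rho> = x/\<rho> - real_of_int q" using r by (simp add: field_simps)
  finally show ?thesis unfolding hat_def by simp
qed

lemma interp_formula:
  assumes r: "\<rho> > 0"
  shows "interp \<rho> f x = (1 - (x/\<rho> - \<lfloor>x/\<rho>\<rfloor>)) * f \<lfloor>x/\<rho>\<rfloor> + (x/\<rho> - \<lfloor>x/\<rho>\<rfloor>) * f (\<lfloor>x/\<rho>\<rfloor>+1)"
proof -
  define p where "p = \<lfloor>x/\<rho>\<rfloor>"
  have p1: "real_of_int p \<le> x/\<rho>" "x/\<rho> < real_of_int p + 1" unfolding p_def by linarith+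
  have z: "hat \<rho> q x = 0" if "q \<notin> {p, p+1}" for q
  proof -
    have "q \<le> p - 1 \<or> q \<ge> p + 2" using that by auto
    then have "\<bar>x/\<rho> - real_of_int q\<bar> \<ge> 1"
    proof
      assume "q \<le> p - 1" then have "real_of_int q \<le> real_of_int p - 1" by linarith
      then show ?thesis using p1 by linarith
    next
      assume "q \<ge> p + 2" then have "real_of_int q \<ge> real_of_int p + 2" by linarith
      then show ?thesis using p1 by linarith
    qed
    then show ?thesis using hat_alt[OF r] by simp
  qed
  have "interp \<rho> f x = (\<Sum>q\<in>{p, p+1}. f q * hat \<rho> q x)" by (rule interp_sum) (use z in auto)
  also have "\<dots> = f p * hat \<rho> p x + f (p+1) * hat \<rho> (p+1) x" by simp
  also have "hat \<rho> p x = 1 - (x/\<rho> - p)" using hat_alt[OF r, of p x] p1 by simp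
  also have "hat \<rho> (p+1) x = (x/\<rho> - p)" using hat_alt[OF r, of "p+1" x] p1 by simp
  finally show ?thesis unfolding p_def by simp
qed

lemma frac_bounds: "real_of_int \<lfloor>u\<rfloor> \<le> u" "u < real_of_int \<lfloor>u\<rfloor> + 1" for u :: real
  by linarith+

lemma interp_shift:
  assumes r: "\<rho> > 0"
  shows "interp \<rho> f (x + real_of_int m * \<rho>) = interp \<rho> (\<lambda>q. f (q + m)) x"
proof -
  have e: "(x + real_of_int m * \<rho>)/\<rho> = x/\<rho> + real_of_int m" using r by (simp add: field_simps)
  have fl: "\<lfloor>(x + real_of_int m * \<rho>)/\<rho>\<rfloor> = \<lfloor>x/\<rho>\<rfloor> + m" unfolding e by simp
  show ?thesis unfolding interp_formula[OF r] fl unfolding e by (simp add: algebra_simps)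
qed

lemma interp_le:
  assumes r: "\<rho> > 0" and b: "\<And>q. f q \<le> B"
  shows "interp \<rho> f x \<le> B"
proof -
  define t where "t = x/\<rho> - \<lfloor>x/\<rho>\<rfloor>"
  have t: "0 \<le> t" "t \<le> 1" unfolding t_def using frac_bounds[of "x/\<rho>"] by linarith+
  have "(1 - t) * f \<lfloor>x/\<rho>\<rfloor> + t * f (\<lfloor>x/\<rho>\<rfloor>+1) \<le> (1-t) * B + t * B"
    by (rule add_mono; rule mult_left_mono) (use t b in auto)
  then show ?thesis unfolding interp_formula[OF r] t_def[symmetric] by (simp add: algebra_simps)
qed

lemma interp_ge:
  assumes r: "\<rho> > 0" and b: "\<And>q. B \<le> f q"
  shows "B \<le> interp \<rho> f x"
proof -
  define t where "t = x/\<rho> - \<lfloor>x/\<rho>\<rfloor>"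
  have t: "0 \<le> t" "t \<le> 1" unfolding t_def using frac_bounds[of "x/\<rho>"] by linarith+
  have "(1 - t) * f \<lfloor>x/\<rho>\<rfloor> + t * f (\<lfloor>x/\<rho>\<rfloor>+1) \<ge> (1-t) * B + t * B"
    by (rule add_mono; rule mult_left_mono) (use t b in auto)
  then show ?thesis unfolding interp_formula[OF r] t_def[symmetric] by (simp add: algebra_simps)
qed

lemma interp_add:
  assumes r: "\<rho> > 0"
  shows "interp \<rho> (\<lambda>q. a * f q + b * g q + c * real_of_int q) x = a * interp \<rho> f x + b * interp \<rho> g x + c * (x/\<rho>)"
  unfolding interp_formula[OF r] by (simp add: algebra_simps)

lemma antimono_int:
  fixes f :: "int \<Rightarrow> real"
  assumes "\<And>q. f (q+1) \<le> (f q :: real)" "p \<le> q"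
  shows "f q \<le> f p"
proof -
  have "\<forall>q. p \<le> q \<longrightarrow> f q \<le> f p"
  proof (intro allI impI)
    fix q assume "p \<le> q"
    then show "f q \<le> f p"
    proof (induction q rule: int_ge_induct)
      case base then show ?case by simp
    next
      case (step i) then show ?case using assms(1)[of i] by linarith
    qed
  qed
  then show ?thesis using assms(2) by blast
qed

lemma interp_antimono:
  assumes r: "\<rho> > 0" and m: "\<And>q. f (q+1) \<le> f q" and xy: "x \<le> y"
  shows "interp \<rho> f y \<le> interp \<rho> f x"
proof -
  define p where "p = \<lfloor>x/\<rho>\<rfloor>"
  define p' where "p' = \<lfloor>y/\<rho>\<rfloor>"
  define t where "t = x/\<rho> - p"
  define t' where "t' = y/\<rho> - p'"
  have t: "0 \<le> t" "t \<le> 1" unfolding t_def p_def using frac_bounds[of "x/\<rho>"] by linarith+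
  have t': "0 \<le> t'" "t' \<le> 1" unfolding t'_def p'_def using frac_bounds[of "y/\<rho>"] by linarith+
  have xy': "x/\<rho> \<le> y/\<rho>" using xy r by (simp add: divide_right_mono)
  have pp: "p \<le> p'" unfolding p_def p'_def using xy' floor_mono by blast
  have Ix: "interp \<rho> f x = (1 - t) * f p + t * f (p+1)" unfolding interp_formula[OF r] t_def p_def by simp
  have Iy: "interp \<rho> f y = (1 - t') * f p' + t' * f (p'+1)" unfolding interp_formula[OF r] t'_def p'_def by simp
  show ?thesis
  proof (cases "p = p'")
    case True
    then have "t \<le> t'" unfolding t_def t'_def using xy' by simp
    then have "(t' - t) * (f (p+1) - f p) \<le> 0" using m[of p] by (simp add: mult_nonneg_nonpos)
    then show ?thesis unfolding Ix Iy using True by (simp add: algebra_simps)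
  next
    case False
    then have "p + 1 \<le> p'" using pp by simp
    then have a: "f p' \<le> f (p+1)" and b: "f (p'+1) \<le> f (p+1)" using antimono_int[of f, OF m] by auto
    have "(1 - t') * f p' + t' * f (p'+1) \<le> (1 - t') * f (p+1) + t' * f (p+1)"
      by (rule add_mono; rule mult_left_mono) (use a b t' in auto)
    moreover have "f (p+1) \<le> (1 - t) * f p + t * f (p+1)"
    proof -
      have "(1-t) * f (p+1) \<le> (1-t) * f p" by (rule mult_left_mono) (use m[of p] t in auto)
      then show ?thesis by (simp add: algebra_simps)
    qed
    ultimately show ?thesis unfolding Ix Iy by (simp add: algebra_simps)
  qed
qed

lemma hat_cont: "\<rho> > 0 \<Longrightarrow> isCont (hat \<rho> q) x"
  unfolding hat_def by (intro continuous_intros) auto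

lemma interp_cont:
  assumes r: "\<rho> > 0"
  shows "isCont (interp \<rho> f) x"
proof -
  define p where "p = \<lfloor>x/\<rho>\<rfloor>"
  define S where "S = {p-3..p+3}"
  have ev: "\<forall>\<^sub>F y in nhds x. interp \<rho> f y = (\<Sum>q\<in>S. f q * hat \<rho> q y)"
    unfolding eventually_nhds_metric
  proof (intro exI[of _ \<rho>] conjI allI impI)
    show "\<rho> > 0" by fact
    fix y assume d: "dist y x < \<rho>"
    show "interp \<rho> f y = (\<Sum>q\<in>S. f q * hat \<rho> q y)"
    proof (rule interp_sum)
      show "finite S" unfolding S_def by simp
      fix q assume q: "q \<notin> S"
      have "\<bar>y/\<rho> - x/\<rho>\<bar> = \<bar>y - x\<bar>/\<rho>" using r by (simp add: diff_divide_distrib[symmetric])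
      also have "\<dots> < 1" using d r by (simp add: dist_real_def)
      finally have dd: "\<bar>y/\<rho> - x/\<rho>\<bar> < 1" .
      have "q \<le> p - 4 \<or> q \<ge> p + 4" using q unfolding S_def by auto
      then have "\<bar>y/\<rho> - real_of_int q\<bar> \<ge> 1"
      proof
        assume "q \<le> p - 4" then have "real_of_int q \<le> real_of_int p - 4" by linarith
        then show ?thesis using dd frac_bounds[of "x/\<rho>"] unfolding p_def by linarith
      next
        assume "q \<ge> p + 4" then have "real_of_int q \<ge> real_of_int p + 4" by linarith
        then show ?thesis using dd frac_bounds[of "x/\<rho>"] unfolding p_def by linarith
      qed
      then show "hat \<rho> q y = 0" using hat_alt[OF r] by simp
    qed
  qed
  have "isCont (\<lambda>y. \<Sum>q\<in>S. f q * hat \<rho> q y) x"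
    by (intro continuous_intros hat_cont[OF r])
  then show ?thesis using isCont_cong[OF ev] by simp
qed



lemma interp_second_diff:
  assumes r: "\<rho> > 0" and w: "\<And>q. w (q+1) + w (q-1) - 2 * w q \<le> K"
  shows "interp \<rho> w (y + \<rho>) + interp \<rho> w (y - \<rho>) - 2 * interp \<rho> w y \<le> K"
proof -
  have a: "interp \<rho> w (y + \<rho>) = interp \<rho> (\<lambda>q. w (q+1)) y" using interp_shift[OF r, of w y 1] by simp
  have b: "interp \<rho> w (y - \<rho>) = interp \<rho> (\<lambda>q. w (q + -1)) y" using interp_shift[OF r, of w y "-1"] by simp
  have "interp \<rho> (\<lambda>q. 1 * w (q+1) + 1 * (\<lambda>q. w (q + -1) - 2 * w q) q + 0 * real_of_int q) y
      = 1 * interp \<rho> (\<lambda>q. w (q+1)) y + 1 * interp \<rho> (\<lambda>q. w (q + -1) - 2 * w q) y + 0 * (y/\<rho>)"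
    by (rule interp_add[OF r])
  moreover have "interp \<rho> (\<lambda>q. 1 * w (q + -1) + (-2) * w q + 0 * real_of_int q) y
      = 1 * interp \<rho> (\<lambda>q. w (q + -1)) y + (-2) * interp \<rho> w y + 0 * (y/\<rho>)"
    by (rule interp_add[OF r])
  moreover have "interp \<rho> (\<lambda>q. 1 * w (q+1) + 1 * (\<lambda>q. w (q + -1) - 2 * w q) q + 0 * real_of_int q) y \<le> K"
    by (rule interp_le[OF r]) (simp add: add_diff_eq w)
  ultimately show ?thesis unfolding a b by simp
qed

lemma interp_incr_one:
  assumes r: "\<rho> > 0" and w: "\<And>q. w (q+1) + w (q-1) - 2 * w q \<le> K * \<rho>^2" and s: "s \<ge> 0"
  shows "interp \<rho> w (y + \<rho> + s) - interp \<rho> w (y + s) - (interp \<rho> w (y + \<rho>) - interp \<rho> w y) \<le> K * \<rho> * s"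
proof -
  define d where "d q = w (q+1) - w q" for q
  define e where "e q = d q - K * \<rho>^2 * real_of_int q" for q
  have D: "interp \<rho> w (x + \<rho>) - interp \<rho> w x = interp \<rho> e x + K * \<rho> * x" for x
  proof -
    have a: "interp \<rho> w (x + \<rho>) = interp \<rho> (\<lambda>q. w (q+1)) x" using interp_shift[OF r, of w x 1] by simp
    have "interp \<rho> (\<lambda>q. 1 * w (q+1) + (-1) * w q + (- K * \<rho>^2) * real_of_int q) x
       = 1 * interp \<rho> (\<lambda>q. w (q+1)) x + (-1) * interp \<rho> w x + (- K * \<rho>^2) * (x/\<rho>)"
      by (rule interp_add[OF r])
    moreover have "(\<lambda>q. 1 * w (q+1) + (-1) * w q + (- K * \<rho>^2) * real_of_int q) = e"
      unfolding e_def d_def by (auto simp: fun_eq_iff)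
    moreover have "K * \<rho>^2 * (x/\<rho>) = K * \<rho> * x" using r by (simp add: power2_eq_square)
    ultimately show ?thesis unfolding a by (simp add: algebra_simps)
  qed
  have em: "e (q+1) \<le> e q" for q
    using w[of "q+1"] unfolding e_def d_def by (simp add: algebra_simps)
  have "interp \<rho> e (y + s) \<le> interp \<rho> e y" by (rule interp_antimono[of \<rho> e, OF r em]) (use s in simp)
  then show ?thesis using D[of y] D[of "y+s"] by (simp add: algebra_simps)
qed

lemma interp_incr:
  assumes r: "\<rho> > 0" and w: "\<And>q. w (q+1) + w (q-1) - 2 * w q \<le> K * \<rho>^2" and s: "s \<ge> 0"
  shows "interp \<rho> w (y + real m * \<rho> + s) - interp \<rho> w (y + s) - (interp \<rho> w (y + real m * \<rho>) - interp \<rho> w y) \<le> K * (real m * \<rho>) * s"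
proof (induction m arbitrary: y)
  case 0 then show ?case by simp
next
  case (Suc m)
  have h1: "interp \<rho> w ((y + \<rho>) + real m * \<rho> + s) - interp \<rho> w ((y + \<rho>) + s) - (interp \<rho> w ((y + \<rho>) + real m * \<rho>) - interp \<rho> w (y + \<rho>)) \<le> K * (real m * \<rho>) * s"
    by (rule Suc.IH)
  have h2: "interp \<rho> w (y + \<rho> + s) - interp \<rho> w (y + s) - (interp \<rho> w (y + \<rho>) - interp \<rho> w y) \<le> K * \<rho> * s"
    by (rule interp_incr_one[OF r w s])
  have e1: "y + \<rho> + real m * \<rho> + s = y + real (Suc m) * \<rho> + s" by (simp add: algebra_simps)
  have e2: "y + \<rho> + real m * \<rho> = y + real (Suc m) * \<rho>" by (simp add: algebra_simps)
  have e3: "y + \<rho> + s = y + s + \<rho>" by simp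
  show ?case using h1 h2 unfolding e1 e2 by (simp add: algebra_simps)
qed



lemma second_diff_bound:
  fixes f :: "real \<Rightarrow> real"
  assumes d1: "\<And>x. f differentiable at x" and d2: "\<And>x. deriv f differentiable at x"
    and b: "\<And>x. \<bar>deriv (deriv f) x\<bar> \<le> C" and r: "r \<ge> 0"
  shows "f (x + r) + f (x - r) - 2 * f x \<le> C * r^2"
proof -
  have D1: "DERIV f x :> deriv f x" for x using d1 DERIV_deriv_iff_real_differentiable by blast
  have D2: "DERIV (deriv f) x :> deriv (deriv f) x" for x using d2 DERIV_deriv_iff_real_differentiable by blast
  have lip: "deriv f a - deriv f b \<le> C * (a - b)" if "b \<le> a" for a b
  proof (cases "b = a")
    case True then show ?thesis by simp
  next
    case False
    then have "b < a" using that by simp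
    from MVT2[OF this, of "deriv f" "deriv (deriv f)"] D2 obtain z where
      "deriv f a - deriv f b = (a - b) * deriv (deriv f) z" by blast
    moreover have "(a - b) * deriv (deriv f) z \<le> (a - b) * C"
      using b[of z] that by (intro mult_left_mono) auto
    ultimately show ?thesis by (simp add: algebra_simps)
  qed
  show ?thesis
  proof (cases "r = 0")
    case True then show ?thesis by simp
  next
    case False
    then have r0: "0 < r" using r by simp
    define g where "g s = f (x + s) + f (x - s) - C * s^2" for s
    define g' where "g' s = deriv f (x + s) - deriv f (x - s) - 2 * C * s" for s
    have "DERIV g s :> g' s" for s
      unfolding g_def g'_def
      by (auto intro!: derivative_eq_intros DERIV_chain2[OF D1])
    from MVT2[OF r0, of g g'] this obtain z where z: "0 < z" "z < r" "g r - g 0 = (r - 0) * g' z" by blast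
    have "g' z \<le> 0" using lip[of "x - z" "x + z"] z unfolding g'_def by (simp add: algebra_simps)
    then have "g r - g 0 \<le> 0" using z r0 by (simp add: mult_nonneg_nonpos)
    then show ?thesis unfolding g_def by (simp add: algebra_simps)
  qed
qed

lemma aux_low: "0 \<le> (a::real) \<Longrightarrow> -c \<le> f \<Longrightarrow> -B \<le> u \<Longrightarrow> -B \<le> v \<Longrightarrow> -B - c \<le> (u+v)/2 + a + f"
  by (simp add: field_simps)

lemma aux_up: "(I::real) \<le> (u+v)/2 + f \<Longrightarrow> f \<le> c \<Longrightarrow> u \<le> B \<Longrightarrow> v \<le> B \<Longrightarrow> I \<le> B + c"
  by (simp add: field_simps)

lemma vback_props:
  fixes F G :: "real \<Rightarrow> real measure \<Rightarrow> real"
  assumes r: "\<rho> > 0" and h: "h > 0"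
    and Gb: "\<And>x. \<bar>G x (\<mu> (real N * h))\<bar> \<le> CG"
    and Gs: "\<And>x. G (x + \<rho>) (\<mu> (real N * h)) + G (x - \<rho>) (\<mu> (real N * h)) - 2 * G x (\<mu> (real N * h)) \<le> CG * \<rho>^2"
    and Fb: "\<And>m x. \<bar>F x (\<mu> (real (N - Suc m) * h))\<bar> \<le> CF"
    and Fs: "\<And>m x. F (x + \<rho>) (\<mu> (real (N - Suc m) * h)) + F (x - \<rho>) (\<mu> (real (N - Suc m) * h))
               - 2 * F x (\<mu> (real (N - Suc m) * h)) \<le> CF * \<rho>^2"
  shows "(\<forall>i. \<bar>vback \<rho> h \<sigma> F G \<mu> N m i\<bar> \<le> CG + real m * h * CF) \<and>
         (\<forall>i. vback \<rho> h \<sigma> F G \<mu> N m (i+1) + vback \<rho> h \<sigma> F G \<mu> N m (i-1) - 2 * vback \<rho> h \<sigma> F G \<mu> N m i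
              \<le> (CG + real m * h * CF) * \<rho>^2)"
proof (induction m)
  case 0
  have e1: "real_of_int (i+1) * \<rho> = real_of_int i * \<rho> + \<rho>" for i by (simp add: algebra_simps)
  have e2: "real_of_int (i-1) * \<rho> = real_of_int i * \<rho> - \<rho>" for i by (simp add: algebra_simps)
  have "G (real_of_int (i+1) * \<rho>) (\<mu> (real N * h)) + G (real_of_int (i-1) * \<rho>) (\<mu> (real N * h))
      - 2 * G (real_of_int i * \<rho>) (\<mu> (real N * h)) \<le> CG * \<rho>^2" for i
    unfolding e1 e2 by (rule Gs)
  then show ?case using Gb by simp
next
  case (Suc m)
  define B where "B = CG + real m * h * CF"
  define v where "v = vback \<rho> h \<sigma> F G \<mu> N m"
  define w where "w = interp \<rho> v"
  define t where "t = real (N - Suc m) * h"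
  define S where "S = sqrt h * \<sigma> t"
  define E where "E i \<alpha> = (w (real_of_int i * \<rho> - h * \<alpha> + S) + w (real_of_int i * \<rho> - h * \<alpha> - S)) / 2
      + h * \<alpha>\<^sup>2 / 2 + h * F (real_of_int i * \<rho>) (\<mu> t)" for i \<alpha>
  have vs: "vback \<rho> h \<sigma> F G \<mu> N (Suc m) i = (INF \<alpha>. E i \<alpha>)" for i
    by (simp add: E_def Let_def w_def t_def v_def S_def)
  have vb: "\<bar>v i\<bar> \<le> B" for i using Suc.IH unfolding v_def B_def by blast
  have vsc: "v (q+1) + v (q-1) - 2 * v q \<le> B * \<rho>^2" for q using Suc.IH unfolding v_def B_def by blast
  have wb: "w y \<le> B" "-B \<le> w y" for y
    unfolding w_def using vb by (auto intro!: interp_le[OF r] interp_ge[OF r] simp: abs_le_iff) (smt (verit) vb abs_le_iff)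
  have Fb': "\<bar>F x (\<mu> t)\<bar> \<le> CF" for x unfolding t_def by (rule Fb)
  have Elow: "- B - h * CF \<le> E i \<alpha>" for i \<alpha>
  proof -
    have "0 \<le> h * \<alpha>\<^sup>2 / 2" using h by simp
    moreover have "- (h * CF) \<le> h * F (real_of_int i * \<rho>) (\<mu> t)"
      using mult_left_mono[OF Fb'[of "real_of_int i * \<rho>", unfolded abs_le_iff, THEN conjunct2], of h] h by simp
    moreover have "-B \<le> w (real_of_int i * \<rho> - h * \<alpha> + S)" "-B \<le> w (real_of_int i * \<rho> - h * \<alpha> - S)" using wb by auto
    ultimately show ?thesis unfolding E_def by (rule aux_low)
  qed
  have bdd: "bdd_below (range (E i))" for i using Elow by (intro bdd_belowI[of _ "- B - h * CF"]) auto
  have up: "(INF \<alpha>. E i \<alpha>) \<le> B + h * CF" for i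
  proof -
    have e0: "E i 0 = (w (real_of_int i * \<rho> + S) + w (real_of_int i * \<rho> - S)) / 2 + h * F (real_of_int i * \<rho>) (\<mu> t)"
      by (simp add: E_def)
    have "(INF \<alpha>. E i \<alpha>) \<le> E i 0" by (rule cINF_lower[OF bdd]) simp
    then have i1: "(INF \<alpha>. E i \<alpha>) \<le> (w (real_of_int i * \<rho> + S) + w (real_of_int i * \<rho> - S)) / 2 + h * F (real_of_int i * \<rho>) (\<mu> t)"
      unfolding e0 .
    have "h * F (real_of_int i * \<rho>) (\<mu> t) \<le> h * CF"
      using mult_left_mono[OF Fb'[of "real_of_int i * \<rho>", unfolded abs_le_iff, THEN conjunct1], of h] h by simp
    from aux_up[OF i1 this wb(1) wb(1)] show ?thesis .
  qed
  have low: "- B - h * CF \<le> (INF \<alpha>. E i \<alpha>)" for i by (rule cINF_greatest) (use Elow in auto)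
  have Bs: "CG + real (Suc m) * h * CF = B + h * CF" unfolding B_def by (simp add: algebra_simps)
  have part1: "\<forall>i. \<bar>vback \<rho> h \<sigma> F G \<mu> N (Suc m) i\<bar> \<le> CG + real (Suc m) * h * CF"
    unfolding vs Bs using up low by (simp add: abs_le_iff) (smt (verit))
  have part2: "vback \<rho> h \<sigma> F G \<mu> N (Suc m) (i+1) + vback \<rho> h \<sigma> F G \<mu> N (Suc m) (i-1)
     - 2 * vback \<rho> h \<sigma> F G \<mu> N (Suc m) i \<le> (B + h * CF) * \<rho>^2" for i
  proof (rule field_le_epsilon)
    fix d :: real assume d: "0 < d"
    have "\<exists>\<alpha>\<in>UNIV. E i \<alpha> < (INF \<alpha>. E i \<alpha>) + d/2"
      using cINF_less_iff[of UNIV "E i" "(INF \<alpha>. E i \<alpha>) + d/2", OF _ bdd] d by simp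
    then obtain \<alpha> where a: "E i \<alpha> < (INF \<alpha>. E i \<alpha>) + d/2" by blast
    have l1: "(INF \<alpha>. E (i+1) \<alpha>) \<le> E (i+1) \<alpha>" by (rule cINF_lower[OF bdd]) simp
    have l2: "(INF \<alpha>. E (i-1) \<alpha>) \<le> E (i-1) \<alpha>" by (rule cINF_lower[OF bdd]) simp
    define x where "x = real_of_int i * \<rho>"
    define y1 where "y1 = x - h * \<alpha> + S"
    define y2 where "y2 = x - h * \<alpha> - S"
    have e1: "real_of_int (i+1) * \<rho> = x + \<rho>" unfolding x_def by (simp add: algebra_simps)
    have e2: "real_of_int (i-1) * \<rho> = x - \<rho>" unfolding x_def by (simp add: algebra_simps)
    have E1: "E (i+1) \<alpha> = (w (y1 + \<rho>) + w (y2 + \<rho>)) / 2 + h * \<alpha>\<^sup>2 / 2 + h * F (x + \<rho>) (\<mu> t)"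
      unfolding E_def e1 y1_def y2_def by (simp add: algebra_simps)
    have E2: "E (i-1) \<alpha> = (w (y1 - \<rho>) + w (y2 - \<rho>)) / 2 + h * \<alpha>\<^sup>2 / 2 + h * F (x - \<rho>) (\<mu> t)"
      unfolding E_def e2 y1_def y2_def by (simp add: algebra_simps)
    have E0: "E i \<alpha> = (w y1 + w y2) / 2 + h * \<alpha>\<^sup>2 / 2 + h * F x (\<mu> t)"
      unfolding E_def y1_def y2_def x_def by simp
    have s1: "w (y1 + \<rho>) + w (y1 - \<rho>) - 2 * w y1 \<le> B * \<rho>^2"
      unfolding w_def by (rule interp_second_diff[OF r vsc])
    have s2: "w (y2 + \<rho>) + w (y2 - \<rho>) - 2 * w y2 \<le> B * \<rho>^2"
      unfolding w_def by (rule interp_second_diff[OF r vsc])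
    have sF: "h * (F (x + \<rho>) (\<mu> t) + F (x - \<rho>) (\<mu> t) - 2 * F x (\<mu> t)) \<le> h * (CF * \<rho>^2)"
      using h Fs[where m=m and x=x] unfolding t_def by (intro mult_left_mono) auto
    have "E (i+1) \<alpha> + E (i-1) \<alpha> - 2 * E i \<alpha> \<le> (B + h * CF) * \<rho>^2"
      unfolding E0 E1 E2 using s1 s2 sF by (simp add: field_simps)
    then show "vback \<rho> h \<sigma> F G \<mu> N (Suc m) (i+1) + vback \<rho> h \<sigma> F G \<mu> N (Suc m) (i-1)
      - 2 * vback \<rho> h \<sigma> F G \<mu> N (Suc m) i \<le> (B + h * CF) * \<rho>^2 + d"
      unfolding vs using a l1 l2 by linarith
  qed
  show ?case using part1 part2 Bs by simp
qed



lemma integrable_cont_supp: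
  fixes H :: "real \<Rightarrow> real"
  assumes c: "\<And>y. isCont H y" and z: "\<And>y. y \<notin> {a..b} \<Longrightarrow> H y = 0"
  shows "integrable lborel H"
proof -
  have "integrable lborel (\<lambda>x. H x * indicator {a..b} x)"
    by (rule borel_integrable_atLeastAtMost) (use c in auto)
  moreover have "(\<lambda>x. H x * indicator {a..b} x) = H"
    using z by (auto simp: fun_eq_iff indicator_def)
  ultimately show ?thesis by simp
qed

lemma integral_box_eq:
  fixes H :: "real \<Rightarrow> real"
  assumes c: "\<And>y. isCont H y" and z: "\<And>y. y \<notin> {a..b} \<Longrightarrow> H y = 0"
  shows "(H has_integral (\<integral>y. H y \<partial>lborel)) {a..b}"
proof -
  have "(H has_integral (\<integral>y. H y \<partial>lborel)) UNIV"
    by (rule has_integral_integral_lborel[OF integrable_cont_supp[OF c z]]) auto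
  moreover have "H = (\<lambda>x. if x \<in> {a..b} then H x else 0)" using z by auto
  ultimately show ?thesis using has_integral_restrict_UNIV[of "{a..b}" H] by metis
qed

lemma mollifier_props:
  assumes "mollifier \<phi>"
  shows "\<exists>R\<ge>0. \<forall>u. \<bar>u\<bar> > R \<longrightarrow> \<phi> u = 0"
    and "\<And>u. DERIV \<phi> u :> deriv \<phi> u"
    and "\<And>u. isCont (deriv \<phi>) u"
    and "\<And>u. isCont \<phi> u"
    and "\<And>u. \<phi> u \<ge> 0"
    and "integrable lborel \<phi>"
    and "integral\<^sup>L lborel \<phi> = 1"
proof -
  from assms obtain R where R: "\<forall>x. \<bar>x\<bar> > R \<longrightarrow> \<phi> x = 0" unfolding mollifier_def by blast
  show "\<exists>R\<ge>0. \<forall>u. \<bar>u\<bar> > R \<longrightarrow> \<phi> u = 0"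
    by (rule exI[of _ "max R 0"]) (use R in auto)
  have d0: "\<phi> differentiable at u" for u using assms unfolding mollifier_def
    by (metis funpow_0)
  have d1: "deriv \<phi> differentiable at u" for u using assms unfolding mollifier_def
    by (metis funpow_0 funpow_Suc_right o_apply One_nat_def)
  show D: "DERIV \<phi> u :> deriv \<phi> u" for u using d0 DERIV_deriv_iff_real_differentiable by blast
  show "isCont (deriv \<phi>) u" for u using d1 DERIV_deriv_iff_real_differentiable DERIV_isCont by blast
  show "isCont \<phi> u" for u using D DERIV_isCont by blast
  show "\<phi> u \<ge> 0" for u using assms unfolding mollifier_def by blast
  show "integrable lborel \<phi>" "integral\<^sup>L lborel \<phi> = 1" using assms unfolding mollifier_def by blast+
qed



lemma conv_basic:
  assumes m: "mollifier \<phi>" and e: "\<epsilon> > 0" and g: "\<And>y. isCont g y"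
  obtains R where "R \<ge> 0" "\<And>u. \<bar>u\<bar> > R \<Longrightarrow> phi_eps \<phi> \<epsilon> u = 0"
    "\<And>u. isCont (phi_eps \<phi> \<epsilon>) u"
    "\<And>u. DERIV (phi_eps \<phi> \<epsilon>) u :> deriv \<phi> (u/\<epsilon>) / \<epsilon> / \<epsilon>"
    "\<And>u. isCont (\<lambda>u. deriv \<phi> (u/\<epsilon>) / \<epsilon> / \<epsilon>) u"
proof -
  from mollifier_props(1)[OF m] obtain R0 where R0: "R0 \<ge> 0" "\<And>u. \<bar>u\<bar> > R0 \<Longrightarrow> \<phi> u = 0" by blast
  show ?thesis
  proof (rule that[of "R0 * \<epsilon>"])
    show "R0 * \<epsilon> \<ge> 0" using R0 e by simp
    fix u
    show "\<bar>u\<bar> > R0 * \<epsilon> \<Longrightarrow> phi_eps \<phi> \<epsilon> u = 0"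
    proof -
      assume "\<bar>u\<bar> > R0 * \<epsilon>"
      then have "\<bar>u/\<epsilon>\<bar> > R0" using e by (simp add: field_simps)
      then show ?thesis unfolding phi_eps_def using R0 by simp
    qed
    have c1: "isCont (\<lambda>u. \<phi> (u/\<epsilon>)) u" by (rule isCont_o2[OF _ mollifier_props(4)[OF m]]) (use e in \<open>auto intro!: continuous_intros\<close>)
    show "isCont (phi_eps \<phi> \<epsilon>) u" unfolding phi_eps_def by (rule isCont_divide[OF c1]) (use e in auto)
    have "DERIV (\<lambda>u. u/\<epsilon>) u :> 1/\<epsilon>" using e by (auto intro!: derivative_eq_intros)
    from DERIV_chain2[OF mollifier_props(2)[OF m] this]
    have "DERIV (\<lambda>u. \<phi> (u/\<epsilon>)) u :> deriv \<phi> (u/\<epsilon>) * (1/\<epsilon>)" .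
    from DERIV_cdivide[OF this, of \<epsilon>]
    show "DERIV (phi_eps \<phi> \<epsilon>) u :> deriv \<phi> (u/\<epsilon>) / \<epsilon> / \<epsilon>" unfolding phi_eps_def by simp
    have c2: "isCont (\<lambda>u. deriv \<phi> (u/\<epsilon>)) u" by (rule isCont_o2[OF _ mollifier_props(3)[OF m]]) (use e in \<open>auto intro!: continuous_intros\<close>)
    show "isCont (\<lambda>u. deriv \<phi> (u/\<epsilon>) / \<epsilon> / \<epsilon>) u" by (intro isCont_divide c2 continuous_const) (use e in auto)
  qed
qed

lemma conv_differentiable:
  assumes m: "mollifier \<phi>" and e: "\<epsilon> > 0" and g: "\<And>y. isCont g y"
  shows "(\<lambda>x. \<integral>y. phi_eps \<phi> \<epsilon> (x - y) * g y \<partial>lborel) differentiable at x0"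
proof -
  obtain R where R: "R \<ge> 0" "\<And>u. \<bar>u\<bar> > R \<Longrightarrow> phi_eps \<phi> \<epsilon> u = 0"
    "\<And>u. isCont (phi_eps \<phi> \<epsilon>) u"
    "\<And>u. DERIV (phi_eps \<phi> \<epsilon>) u :> deriv \<phi> (u/\<epsilon>) / \<epsilon> / \<epsilon>"
    "\<And>u. isCont (\<lambda>u. deriv \<phi> (u/\<epsilon>) / \<epsilon> / \<epsilon>) u"
    using conv_basic[OF m e g] by blast
  define \<psi> where "\<psi> = phi_eps \<phi> \<epsilon>"
  define \<psi>' where "\<psi>' u = deriv \<phi> (u/\<epsilon>) / \<epsilon> / \<epsilon>" for u
  define f where "f x = (\<integral>y. \<psi> (x - y) * g y \<partial>lborel)" for x
  define A where "A = x0 - R - 1"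
  define B where "B = x0 + R + 1"
  define U where "U = ball x0 (1::real)"
  have zero: "\<psi> (x - y) * g y = 0" if "x \<in> U" "y \<notin> {A..B}" for x y
  proof -
    have "\<bar>x - x0\<bar> < 1" using that(1) unfolding U_def by (simp add: dist_real_def abs_minus_commute)
    then have "\<bar>x - y\<bar> > R" using that(2) unfolding A_def B_def by auto
    then show ?thesis unfolding \<psi>_def using R(2) by simp
  qed
  have cH: "isCont (\<lambda>y. \<psi> (x - y) * g y) y" for x y
  proof -
    have "isCont (\<lambda>y. \<psi> (x - y)) y" unfolding \<psi>_def
      by (rule isCont_o2[OF _ R(3)]) (intro continuous_intros)
    then show ?thesis using g by (intro continuous_intros)
  qed
  have eqI: "integral {A..B} (\<lambda>y. \<psi> (x - y) * g y) = f x" if "x \<in> U" for x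
    unfolding f_def by (rule integral_unique, rule integral_box_eq[OF cH]) (use zero that in auto)
  have lb: "((\<lambda>x. integral (cbox A B) (\<lambda>t. \<psi> (x - t) * g t)) has_field_derivative
      integral (cbox A B) (\<lambda>t. \<psi>' (x0 - t) * g t)) (at x0 within U)"
  proof (rule leibniz_rule_field_derivative[where f = "\<lambda>x t. \<psi> (x - t) * g t" and fx = "\<lambda>x t. \<psi>' (x - t) * g t"])
    fix x t :: real
    have "DERIV (\<lambda>x. x - t) x :> 1" by (auto intro!: derivative_eq_intros)
    from DERIV_chain2[OF R(4)[of "x - t"] this] have "DERIV (\<lambda>x. \<psi> (x - t)) x :> \<psi>' (x - t) * 1"
      unfolding \<psi>_def \<psi>'_def .
    then have "DERIV (\<lambda>x. \<psi> (x - t) * g t) x :> \<psi>' (x - t) * g t"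
      using DERIV_cmult_right[of "\<lambda>x. \<psi> (x - t)" "\<psi>' (x - t) * 1" x UNIV "g t"] by simp
    then show "((\<lambda>x. \<psi> (x - t) * g t) has_field_derivative \<psi>' (x - t) * g t) (at x within U)"
      by (rule has_field_derivative_at_within)
  next
    fix x
    show "(\<lambda>t. \<psi> (x - t) * g t) integrable_on cbox A B"
      unfolding cbox_interval
      by (rule integrable_continuous_interval, rule continuous_at_imp_continuous_on) (use cH in auto)
  next
    have cp: "continuous_on UNIV \<psi>'" unfolding \<psi>'_def by (rule continuous_at_imp_continuous_on) (use R(5) in auto)
    have cg: "continuous_on UNIV g" by (rule continuous_at_imp_continuous_on) (use g in auto)
    have "continuous_on UNIV (\<lambda>p::real\<times>real. \<psi>' (fst p - snd p) * g (snd p))"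
      by (intro continuous_on_mult continuous_on_compose2[OF cp] continuous_on_compose2[OF cg] continuous_intros) auto
    then show "continuous_on (U \<times> cbox A B) (\<lambda>(x, t). \<psi>' (x - t) * g t)"
    proof -
      assume a: "continuous_on UNIV (\<lambda>p::real\<times>real. \<psi>' (fst p - snd p) * g (snd p))"
      have "(\<lambda>(x, t). \<psi>' (x - t) * g t) = (\<lambda>p::real\<times>real. \<psi>' (fst p - snd p) * g (snd p))"
        by (auto simp: fun_eq_iff)
      then show ?thesis using continuous_on_subset[OF a] by simp
    qed
  next
    show "x0 \<in> U" "convex U" unfolding U_def by auto
  qed
  then have lb': "((\<lambda>x. integral (cbox A B) (\<lambda>t. \<psi> (x - t) * g t)) has_field_derivative
      integral (cbox A B) (\<lambda>t. \<psi>' (x0 - t) * g t)) (at x0)"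
    using at_within_open[of x0 U] unfolding U_def by simp
  have "(f has_field_derivative integral (cbox A B) (\<lambda>t. \<psi>' (x0 - t) * g t)) (at x0)"
    by (rule has_field_derivative_transform_within_open[OF lb', of U]) (use eqI in \<open>auto simp: U_def cbox_interval\<close>)
  then show ?thesis unfolding f_def \<psi>_def real_differentiable_def by blast
qed



lemma phi_eps_integral:
  assumes m: "mollifier \<phi>" and e: "\<epsilon> > 0"
  shows "integral\<^sup>L lborel (phi_eps \<phi> \<epsilon>) = 1"
proof -
  have "(\<integral>z. \<phi> (z/\<epsilon>) \<partial>lborel) = \<bar>\<epsilon>\<bar> *\<^sub>R (\<integral>z. \<phi> ((0 + \<epsilon> * z)/\<epsilon>) \<partial>lborel)"
    by (rule lborel_integral_real_affine) (use e in simp)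
  also have "(\<lambda>z. \<phi> ((0 + \<epsilon> * z)/\<epsilon>)) = \<phi>" using e by (simp add: fun_eq_iff)
  finally have "(\<integral>z. \<phi> (z/\<epsilon>) \<partial>lborel) = \<epsilon>" using mollifier_props(7)[OF m] e by simp
  then have "(\<integral>z. \<phi> (z/\<epsilon>) / \<epsilon> \<partial>lborel) = 1" using e by simp
  then show ?thesis unfolding phi_eps_def by simp
qed

lemma conv_shift:
  fixes g :: "real \<Rightarrow> real"
  shows "(\<integral>y. phi_eps \<phi> \<epsilon> (x - y) * g y \<partial>lborel) = (\<integral>z. phi_eps \<phi> \<epsilon> z * g (x - z) \<partial>lborel)"
proof -
  have "(\<integral>y. phi_eps \<phi> \<epsilon> (x - y) * g y \<partial>lborel) = \<bar>-1\<bar> *\<^sub>R (\<integral>z. phi_eps \<phi> \<epsilon> (x - (x + (-1) * z)) * g (x + (-1) * z) \<partial>lborel)"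
    by (rule lborel_integral_real_affine) simp
  also have "(\<lambda>z. phi_eps \<phi> \<epsilon> (x - (x + (-1) * z)) * g (x + (-1) * z)) = (\<lambda>z. phi_eps \<phi> \<epsilon> z * g (x - z))"
    by (simp add: fun_eq_iff)
  finally show ?thesis by simp
qed

lemma conv_incr:
  assumes m: "mollifier \<phi>" and e: "\<epsilon> > 0" and g: "\<And>y. isCont g y"
    and pw: "\<And>y. g (y + L + s) - g (y + s) - (g (y + L) - g y) \<le> M"
  defines "f \<equiv> \<lambda>x. \<integral>y. phi_eps \<phi> \<epsilon> (x - y) * g y \<partial>lborel"
  shows "f (a + L + s) - f (a + s) - (f (a + L) - f a) \<le> M"
proof -
  obtain R where R: "R \<ge> 0" "\<And>u. \<bar>u\<bar> > R \<Longrightarrow> phi_eps \<phi> \<epsilon> u = 0"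
    "\<And>u. isCont (phi_eps \<phi> \<epsilon>) u"
    "\<And>u. DERIV (phi_eps \<phi> \<epsilon>) u :> deriv \<phi> (u/\<epsilon>) / \<epsilon> / \<epsilon>"
    "\<And>u. isCont (\<lambda>u. deriv \<phi> (u/\<epsilon>) / \<epsilon> / \<epsilon>) u"
    using conv_basic[OF m e g] by blast
  define \<psi> where "\<psi> = phi_eps \<phi> \<epsilon>"
  have fz: "f c = (\<integral>z. \<psi> z * g (c - z) \<partial>lborel)" for c unfolding f_def \<psi>_def by (rule conv_shift)
  have int: "integrable lborel (\<lambda>z. \<psi> z * g (c - z))" for c
  proof (rule integrable_cont_supp[where a = "-R" and b = R])
    fix y
    have "isCont (\<lambda>z. g (c - z)) y" by (rule isCont_o2[OF _ g]) (intro continuous_intros)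
    then show "isCont (\<lambda>z. \<psi> z * g (c - z)) y" unfolding \<psi>_def using R(3) by (intro continuous_intros)
  next
    fix y :: real assume "y \<notin> {-R..R}"
    then have "\<bar>y\<bar> > R" by auto
    then show "\<psi> y * g (c - y) = 0" unfolding \<psi>_def using R(2) by simp
  qed
  have intc: "integrable lborel (\<lambda>z. \<psi> z * M)"
  proof (rule integrable_cont_supp[where a = "-R" and b = R])
    fix y
    show "isCont (\<lambda>z. \<psi> z * M) y" unfolding \<psi>_def using R(3) by (intro continuous_intros)
  next
    fix y :: real assume "y \<notin> {-R..R}"
    then have "\<bar>y\<bar> > R" by auto
    then show "\<psi> y * M = 0" unfolding \<psi>_def using R(2) by simp
  qed
  have pos: "\<psi> z \<ge> 0" for z unfolding \<psi>_def phi_eps_def using mollifier_props(5)[OF m] e by simp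
  have "f (a + L + s) - f (a + s) - (f (a + L) - f a) =
     (\<integral>z. (\<psi> z * g (a + L + s - z) - \<psi> z * g (a + s - z)) - (\<psi> z * g (a + L - z) - \<psi> z * g (a - z)) \<partial>lborel)"
    unfolding fz using int by (simp add: integrable_diff)
  also have "\<dots> \<le> (\<integral>z. \<psi> z * M \<partial>lborel)"
  proof (rule integral_mono)
    show "integrable lborel (\<lambda>z. (\<psi> z * g (a + L + s - z) - \<psi> z * g (a + s - z)) - (\<psi> z * g (a + L - z) - \<psi> z * g (a - z)))"
      by (intro Bochner_Integration.integrable_diff int)
    show "integrable lborel (\<lambda>z. \<psi> z * M)" by (rule intc)
    fix z
    have "g ((a - z) + L + s) - g ((a - z) + s) - (g ((a - z) + L) - g (a - z)) \<le> M" by (rule pw)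
    then have "g (a + L + s - z) - g (a + s - z) - (g (a + L - z) - g (a - z)) \<le> M"
      by (simp add: algebra_simps)
    then have "\<psi> z * (g (a + L + s - z) - g (a + s - z) - (g (a + L - z) - g (a - z))) \<le> \<psi> z * M"
      using pos[of z] by (rule mult_left_mono)
    then show "(\<psi> z * g (a + L + s - z) - \<psi> z * g (a + s - z)) - (\<psi> z * g (a + L - z) - \<psi> z * g (a - z)) \<le> \<psi> z * M"
      by (simp add: algebra_simps)
  qed
  also have "\<dots> = M" using phi_eps_integral[OF m e] unfolding \<psi>_def by simp
  finally show ?thesis .
qed

lemma deriv_diff_le:
  fixes f :: "real \<Rightarrow> real"
  assumes da: "f differentiable at a" and db: "f differentiable at b"
    and le: "\<And>s. s > 0 \<Longrightarrow> f (b + s) - f b - (f (a + s) - f a) \<le> M * s"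
  shows "deriv f b - deriv f a \<le> M"
proof -
  have Da: "DERIV f a :> deriv f a" using da DERIV_deriv_iff_real_differentiable by blast
  have Db: "DERIV f b :> deriv f b" using db DERIV_deriv_iff_real_differentiable by blast
  have la: "((\<lambda>h. (f (a + h) - f a) / h) \<longlongrightarrow> deriv f a) (at 0)" using Da DERIV_def by blast
  have lb: "((\<lambda>h. (f (b + h) - f b) / h) \<longlongrightarrow> deriv f b) (at 0)" using Db DERIV_def by blast
  have "((\<lambda>h. (f (b + h) - f b) / h - (f (a + h) - f a) / h) \<longlongrightarrow> deriv f b - deriv f a) (at 0)"
    by (intro tendsto_diff la lb)
  then have l: "((\<lambda>h. (f (b + h) - f b) / h - (f (a + h) - f a) / h) \<longlongrightarrow> deriv f b - deriv f a) (at_right 0)"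
    using filterlim_at_split by blast
  have ev: "\<forall>\<^sub>F h in at_right (0::real). (f (b + h) - f b) / h - (f (a + h) - f a) / h \<le> M"
    using eventually_at_right_less[of "0::real"]
  proof (rule eventually_mono)
    fix h :: real assume h: "0 < h"
    have "(f (b + h) - f b) / h - (f (a + h) - f a) / h = (f (b + h) - f b - (f (a + h) - f a)) / h"
      by (simp add: diff_divide_distrib)
    also have "\<dots> \<le> M * h / h" using le[OF h] h by (intro divide_right_mono) auto
    also have "\<dots> = M" using h by simp
    finally show "(f (b + h) - f b) / h - (f (a + h) - f a) / h \<le> M" .
  qed
  show ?thesis by (rule tendsto_upperbound[OF l ev]) simp
qed



lemma gap_mono:
  fixes z :: "int \<Rightarrow> real"
  assumes gap: "\<And>j. z (j+1) - z j \<ge> \<delta>" and "p \<le> q"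
  shows "z q - z p \<ge> real_of_int (q - p) * \<delta>"
proof -
  have "\<forall>q. p \<le> q \<longrightarrow> z q - z p \<ge> real_of_int (q - p) * \<delta>"
  proof (intro allI impI)
    fix q assume "p \<le> q"
    then show "z q - z p \<ge> real_of_int (q - p) * \<delta>"
    proof (induction q rule: int_ge_induct)
      case base then show ?case by simp
    next
      case (step i)
      have "real_of_int (i + 1 - p) * \<delta> = real_of_int (i - p) * \<delta> + \<delta>" by (simp add: algebra_simps)
      then show ?case using step.IH gap[of i] by linarith
    qed
  qed
  then show ?thesis using assms(2) by blast
qed

lemma hat_sum_bound:
  fixes z :: "int \<Rightarrow> real"
  assumes gap: "\<And>j. z (j+1) - z j \<ge> \<delta>" and d1: "\<delta> \<ge> 3/4" and d2: "\<delta> \<le> 1"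
  shows "(\<lambda>j. max 0 (1 - \<bar>z j\<bar>)) summable_on UNIV \<and> infsum (\<lambda>j. max 0 (1 - \<bar>z j\<bar>)) UNIV \<le> 1 + 2 * (1 - \<delta>)"
proof -
  define t where "t j = max 0 (1 - \<bar>z j\<bar>)" for j
  define J where "J = {j. \<bar>z j\<bar> < 1}"
  have t0: "t j = 0" if "j \<notin> J" for j using that unfolding t_def J_def by auto
  have tJ: "t j = 1 - \<bar>z j\<bar>" if "j \<in> J" for j using that unfolding t_def J_def by auto
  have close: "q - p \<le> 2" if "p \<in> J" "q \<in> J" "p \<le> q" for p q
  proof (rule ccontr)
    assume "\<not> q - p \<le> 2"
    then have "q - p \<ge> 3" by simp
    then have "real_of_int (q - p) \<ge> 3" by linarith
    then have "real_of_int (q - p) * \<delta> \<ge> 3 * (3/4)" using d1 by (intro mult_mono) auto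
    moreover have "z q - z p \<ge> real_of_int (q - p) * \<delta>" by (rule gap_mono[of \<delta> z, OF gap that(3)])
    moreover have "\<bar>z p\<bar> < 1" "\<bar>z q\<bar> < 1" using that unfolding J_def by auto
    ultimately show False by linarith
  qed
  show ?thesis
  proof (cases "J = {}")
    case True
    then have "t = (\<lambda>_. 0)" using t0 by auto
    then show ?thesis unfolding t_def[symmetric] using d2 by simp
  next
    case False
    then obtain a0 where a0: "a0 \<in> J" by blast
    have sub0: "J \<subseteq> {a0-2..a0+2}"
    proof
      fix j assume j: "j \<in> J"
      show "j \<in> {a0-2..a0+2}"
      proof (cases "a0 \<le> j")
        case True then show ?thesis using close[OF a0 j] by auto
      next
        case False then show ?thesis using close[OF j a0] by auto
      qed
    qed
    have fin: "finite J" using finite_subset[OF sub0] by simp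
    define a where "a = Min J"
    have aJ: "a \<in> J" unfolding a_def using fin False by simp
    have amin: "a \<le> j" if "j \<in> J" for j unfolding a_def using fin that by simp
    have sub: "J \<subseteq> {a, a+1, a+2}"
    proof
      fix j assume j: "j \<in> J"
      have "a \<le> j" "j - a \<le> 2" using amin[OF j] close[OF aJ j] by auto
      then have "j = a \<or> j = a + 1 \<or> j = a + 2" by auto
      then show "j \<in> {a, a+1, a+2}" by auto
    qed
    have inf_eq: "infsum t UNIV = infsum t {a, a+1, a+2}"
      by (rule infsum_cong_neutral) (use t0 sub in auto)
    have summ: "t summable_on UNIV"
    proof -
      have "t summable_on {a, a+1, a+2}" by simp
      then show ?thesis
        by (rule summable_on_cong_neutral[THEN iffD1, rotated 3]) (use t0 sub in auto)
    qed
    have s3: "infsum t {a, a+1, a+2} = t a + t (a+1) + t (a+2)" by simp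
    have g1: "z (a+1) - z a \<ge> \<delta>" using gap[of a] by simp
    have g2: "z (a+2) - z (a+1) \<ge> \<delta>" using gap[of "a+1"] by (simp add: add.assoc)
    have za: "\<bar>z a\<bar> < 1" using aJ unfolding J_def by simp
    have tnn: "t j \<ge> 0" for j unfolding t_def by simp
    have bound: "t a + t (a+1) + t (a+2) \<le> 1 + 2 * (1 - \<delta>)"
    proof (cases "a + 1 \<in> J")
      case False
      then have "z (a+1) \<ge> 1" using za g1 d1 unfolding J_def by auto
      then have "a + 2 \<notin> J" using g2 d1 unfolding J_def by auto
      then show ?thesis using t0 False tJ[OF aJ] d2 by simp
    next
      case a1: True
      have za1: "\<bar>z (a+1)\<bar> < 1" using a1 unfolding J_def by simp
      show ?thesis
      proof (cases "a + 2 \<in> J")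
        case False
        then show ?thesis using t0[OF False] tJ[OF aJ] tJ[OF a1] g1 za za1 d2 by auto
      next
        case True
        show ?thesis using tJ[OF True] tJ[OF aJ] tJ[OF a1] g1 g2 za za1 d2 by auto
      qed
    qed
    show ?thesis unfolding t_def[symmetric] using summ inf_eq s3 bound by simp
  qed
qed



lemma Phi_gap:
  assumes m: "mollifier \<phi>" and e: "\<epsilon> > 0" and r: "\<rho> > 0" and h: "h > 0"
    and sc: "\<And>q. vgrid \<rho> h \<sigma> F G \<mu> N k (q+1) + vgrid \<rho> h \<sigma> F G \<mu> N k (q-1) - 2 * vgrid \<rho> h \<sigma> F G \<mu> N k q \<le> Kg * \<rho>^2"
    and KK: "Kg \<le> K" and ij: "j \<le> i"
  shows "Phi s \<phi> \<epsilon> \<rho> h \<sigma> F G \<mu> N i k - Phi s \<phi> \<epsilon> \<rho> h \<sigma> F G \<mu> N j k \<ge> (1 - h * K) * (real_of_int i * \<rho> - real_of_int j * \<rho>)"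
proof -
  define w where "w = vgrid \<rho> h \<sigma> F G \<mu> N k"
  define g where "g = interp \<rho> w"
  define f where "f x = (\<integral>y. phi_eps \<phi> \<epsilon> (x - y) * g y \<partial>lborel)" for x
  have gc: "isCont g y" for y unfolding g_def by (rule interp_cont[OF r])
  have kk: "nat \<lfloor>real k * h / h\<rfloor> = k" using h by simp
  have vf: "(\<lambda>x. veps \<phi> \<epsilon> \<rho> h \<sigma> F G \<mu> N x (real k * h)) = f"
    unfolding veps_def vrh_def kk f_def g_def w_def by simp
  define xi where "xi = real_of_int i * \<rho>"
  define xj where "xj = real_of_int j * \<rho>"
  define mm where "mm = nat (i - j)"
  have L: "xi = xj + real mm * \<rho>" unfolding xi_def xj_def mm_def using ij by (simp add: algebra_simps)
  have Lnn: "real mm * \<rho> \<ge> 0" using r by simp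
  have dle: "deriv f xi - deriv f xj \<le> Kg * (real mm * \<rho>)"
  proof (rule deriv_diff_le)
    show "f differentiable at xj" "f differentiable at xi" unfolding f_def by (rule conv_differentiable[OF m e gc])+
    fix s :: real assume s: "s > 0"
    have pw: "g (y + real mm * \<rho> + s) - g (y + s) - (g (y + real mm * \<rho>) - g y) \<le> Kg * (real mm * \<rho>) * s" for y
      unfolding g_def by (rule interp_incr[OF r _ less_imp_le[OF s]]) (use sc in \<open>simp add: w_def\<close>)
    have "f (xj + real mm * \<rho> + s) - f (xj + s) - (f (xj + real mm * \<rho>) - f xj) \<le> Kg * (real mm * \<rho>) * s"
      unfolding f_def by (rule conv_incr[OF m e gc pw])
    then show "f (xi + s) - f xi - (f (xj + s) - f xj) \<le> Kg * (real mm * \<rho>) * s"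
      unfolding L by (simp add: algebra_simps)
  qed
  have "Kg * (real mm * \<rho>) \<le> K * (real mm * \<rho>)" using KK Lnn by (rule mult_right_mono)
  then have "deriv f xi - deriv f xj \<le> K * (xi - xj)" using dle L by simp
  then have "h * (deriv f xi - deriv f xj) \<le> h * (K * (xi - xj))" using h by (intro mult_left_mono) auto
  then have dle2: "h * (deriv f xi - deriv f xj) \<le> h * K * (xi - xj)" by (simp add: mult.assoc)
  have "Phi s \<phi> \<epsilon> \<rho> h \<sigma> F G \<mu> N i k - Phi s \<phi> \<epsilon> \<rho> h \<sigma> F G \<mu> N j k = (xi - xj) - h * (deriv f xi - deriv f xj)"
    unfolding Phi_def vf xi_def xj_def by (simp add: algebra_simps)
  also have "\<dots> \<ge> (1 - h * K) * (xi - xj)" using dle2 by (simp add: algebra_simps)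
  finally show ?thesis unfolding xi_def xj_def .
qed

theorem lemma4p6:
  fixes T :: real and F G :: "real \<Rightarrow> real measure \<Rightarrow> real" and \<sigma> :: "real \<Rightarrow> real"
    and m0 :: "real measure" and \<phi> :: "real \<Rightarrow> real"
    and \<rho>s hs \<epsilon>s :: "nat \<Rightarrow> real" and Ns :: "nat \<Rightarrow> nat"
  assumes T_pos: "T > 0"
    and F_A1: "A1_coeff F" and G_A1: "A1_coeff G"
    and \<sigma>_cont: "continuous_on {0..T} \<sigma>"
    and m0_A1: "\<exists>f0::real\<Rightarrow>real. f0 \<in> borel_measurable lborel \<and> (\<forall>x. f0 x \<ge> 0) \<and>
                  (\<exists>B. \<forall>x. f0 x \<le> B) \<and> (\<exists>R. \<forall>x. \<bar>x\<bar> > R \<longrightarrow> f0 x = 0) \<and>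
                  m0 = density lborel (\<lambda>x. ennreal (f0 x)) \<and> prob_space m0"
    and \<phi>_moll: "mollifier \<phi>"
    and pos: "\<And>n. \<rho>s n > 0 \<and> hs n > 0 \<and> \<epsilon>s n > 0"
    and lim: "\<rho>s \<longlonglongrightarrow> 0" "hs \<longlonglongrightarrow> 0" "\<epsilon>s \<longlonglongrightarrow> 0"
    and Ns_def: "\<And>n. T = real (Ns n) * hs n"
  shows "\<exists>c>0. \<exists>n0. \<forall>n\<ge>n0. \<forall>\<mu>. cont_P1_path T \<mu> \<longrightarrow>
     (\<forall>i j::int. \<forall>k<Ns n.
        min (\<bar>Phi 1 \<phi> (\<epsilon>s n) (\<rho>s n) (hs n) \<sigma> F G \<mu> (Ns n) i k
              - Phi 1 \<phi> (\<epsilon>s n) (\<rho>s n) (hs n) \<sigma> F G \<mu> (Ns n) j k\<bar>\<^sup>2)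
            (\<bar>Phi (-1) \<phi> (\<epsilon>s n) (\<rho>s n) (hs n) \<sigma> F G \<mu> (Ns n) i k
              - Phi (-1) \<phi> (\<epsilon>s n) (\<rho>s n) (hs n) \<sigma> F G \<mu> (Ns n) j k\<bar>\<^sup>2)
        \<ge> (1 - c * hs n) * \<bar>real_of_int i * \<rho>s n - real_of_int j * \<rho>s n\<bar>\<^sup>2) \<and>
     (\<forall>i::int. \<forall>k<Ns n.
        (\<lambda>j. hat (\<rho>s n) i (Phi 1 \<phi> (\<epsilon>s n) (\<rho>s n) (hs n) \<sigma> F G \<mu> (Ns n) j k)
             + hat (\<rho>s n) i (Phi (-1) \<phi> (\<epsilon>s n) (\<rho>s n) (hs n) \<sigma> F G \<mu> (Ns n) j k))
          summable_on UNIV \<and>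
        infsum (\<lambda>j. hat (\<rho>s n) i (Phi 1 \<phi> (\<epsilon>s n) (\<rho>s n) (hs n) \<sigma> F G \<mu> (Ns n) j k)
             + hat (\<rho>s n) i (Phi (-1) \<phi> (\<epsilon>s n) (\<rho>s n) (hs n) \<sigma> F G \<mu> (Ns n) j k)) UNIV / 2
          \<le> 1 + c * hs n)"
proof -
  from F_A1 obtain CF where CF: "\<forall>m. P1 m \<longrightarrow> (\<forall>x.
      \<bar>F x m\<bar> \<le> CF \<and>
      (\<lambda>y. F y m) differentiable (at x) \<and>
      deriv (\<lambda>y. F y m) differentiable (at x) \<and>
      isCont (deriv (deriv (\<lambda>y. F y m))) x \<and>
      \<bar>deriv (\<lambda>y. F y m) x\<bar> \<le> CF \<and>
      \<bar>deriv (deriv (\<lambda>y. F y m)) x\<bar> \<le> CF)" unfolding A1_coeff_def by blast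
  from G_A1 obtain CG where CG: "\<forall>m. P1 m \<longrightarrow> (\<forall>x.
      \<bar>G x m\<bar> \<le> CG \<and>
      (\<lambda>y. G y m) differentiable (at x) \<and>
      deriv (\<lambda>y. G y m) differentiable (at x) \<and>
      isCont (deriv (deriv (\<lambda>y. G y m))) x \<and>
      \<bar>deriv (\<lambda>y. G y m) x\<bar> \<le> CG \<and>
      \<bar>deriv (deriv (\<lambda>y. G y m)) x\<bar> \<le> CG)" unfolding A1_coeff_def by blast
  define CF' where "CF' = \<bar>CF\<bar>"
  define CG' where "CG' = \<bar>CG\<bar>"
  have CF'0: "CF' \<ge> 0" and CG'0: "CG' \<ge> 0" unfolding CF'_def CG'_def by auto
  have Fb: "\<bar>F x m\<bar> \<le> CF'" if "P1 m" for x m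
  proof -
    have "\<bar>F x m\<bar> \<le> CF" using CF that by blast
    then show ?thesis unfolding CF'_def by simp
  qed
  have Gb: "\<bar>G x m\<bar> \<le> CG'" if "P1 m" for x m
  proof -
    have "\<bar>G x m\<bar> \<le> CG" using CG that by blast
    then show ?thesis unfolding CG'_def by simp
  qed
  have Fs: "F (x + r) m + F (x - r) m - 2 * F x m \<le> CF' * r^2" if "P1 m" "r \<ge> 0" for x m r
  proof (rule second_diff_bound[of "\<lambda>y. F y m" CF' r x])
    show "(\<lambda>y. F y m) differentiable at x" "deriv (\<lambda>y. F y m) differentiable at x" for x using CF that by blast+
    show "\<bar>deriv (deriv (\<lambda>y. F y m)) x\<bar> \<le> CF'" for x
    proof -
      have "\<bar>deriv (deriv (\<lambda>y. F y m)) x\<bar> \<le> CF" using CF that by blast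
      then show ?thesis unfolding CF'_def by simp
    qed
  qed (use that in simp)
  have Gs: "G (x + r) m + G (x - r) m - 2 * G x m \<le> CG' * r^2" if "P1 m" "r \<ge> 0" for x m r
  proof (rule second_diff_bound[of "\<lambda>y. G y m" CG' r x])
    show "(\<lambda>y. G y m) differentiable at x" "deriv (\<lambda>y. G y m) differentiable at x" for x using CG that by blast+
    show "\<bar>deriv (deriv (\<lambda>y. G y m)) x\<bar> \<le> CG'" for x
    proof -
      have "\<bar>deriv (deriv (\<lambda>y. G y m)) x\<bar> \<le> CG" using CG that by blast
      then show ?thesis unfolding CG'_def by simp
    qed
  qed (use that in simp)
  define K where "K = CG' + T * CF' + 1"
  have K0: "K > 0" unfolding K_def using CF'0 CG'0 T_pos by (simp add: add_nonneg_pos)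
  define c where "c = 2 * K"
  have "\<forall>\<^sub>F n in sequentially. hs n < 1 / (4 * K)"
    using order_tendstoD(2)[OF lim(2)] K0 by simp
  then obtain n0 where n0: "\<And>n. n \<ge> n0 \<Longrightarrow> hs n < 1 / (4 * K)" unfolding eventually_sequentially by blast
  have c0: "c > 0" unfolding c_def using K0 by simp
  show ?thesis
  proof (rule exI[of _ c], rule conjI[OF c0], rule exI[of _ n0], intro allI impI)
    fix n \<mu> assume nn: "n \<ge> n0" and cp: "cont_P1_path T \<mu>"
    define \<rho> where "\<rho> = \<rho>s n"
    define h where "h = hs n"
    define \<epsilon> where "\<epsilon> = \<epsilon>s n"
    define N where "N = Ns n"
    have r: "\<rho> > 0" and h: "h > 0" and e: "\<epsilon> > 0" using pos[of n] unfolding \<rho>_def h_def \<epsilon>_def by auto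
    have TN: "T = real N * h" unfolding N_def h_def by (rule Ns_def)
    have hK: "h * K \<le> 1/4"
    proof -
      have "h < 1 / (4 * K)" using n0[OF nn] unfolding h_def .
      then have "h * K < 1 / (4 * K) * K" using K0 by (intro mult_strict_right_mono) auto
      then show ?thesis using K0 by simp
    qed
    have hK0: "h * K > 0" using h K0 by simp
    have P1t: "P1 (\<mu> t)" if "0 \<le> t" "t \<le> T" for t using cp that unfolding cont_P1_path_def by auto
    have tm: "0 \<le> real (N - Suc m) * h \<and> real (N - Suc m) * h \<le> T" for m
    proof -
      have "real (N - Suc m) * h \<le> real N * h" using h by (intro mult_right_mono) auto
      then show ?thesis using h TN by simp
    qed
    have tN: "P1 (\<mu> (real N * h))" using P1t[of "real N * h"] TN T_pos by simp
    have vp: "(\<forall>i. \<bar>vback \<rho> h \<sigma> F G \<mu> N mm i\<bar> \<le> CG' + real mm * h * CF') \<and>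
         (\<forall>i. vback \<rho> h \<sigma> F G \<mu> N mm (i+1) + vback \<rho> h \<sigma> F G \<mu> N mm (i-1) - 2 * vback \<rho> h \<sigma> F G \<mu> N mm i
              \<le> (CG' + real mm * h * CF') * \<rho>^2)" for mm
    proof (rule vback_props[OF r h])
      show "\<bar>G x (\<mu> (real N * h))\<bar> \<le> CG'" for x by (rule Gb[OF tN])
      show "G (x + \<rho>) (\<mu> (real N * h)) + G (x - \<rho>) (\<mu> (real N * h)) - 2 * G x (\<mu> (real N * h)) \<le> CG' * \<rho>^2" for x
        by (rule Gs[OF tN]) (use r in simp)
      show "\<bar>F x (\<mu> (real (N - Suc m) * h))\<bar> \<le> CF'" for m x by (rule Fb[OF P1t]) (use tm in auto)
      show "F (x + \<rho>) (\<mu> (real (N - Suc m) * h)) + F (x - \<rho>) (\<mu> (real (N - Suc m) * h))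
               - 2 * F x (\<mu> (real (N - Suc m) * h)) \<le> CF' * \<rho>^2" for m x
        by (rule Fs[OF P1t]) (use tm r in auto)
    qed
    have gap: "Phi s \<phi> \<epsilon> \<rho> h \<sigma> F G \<mu> N i k - Phi s \<phi> \<epsilon> \<rho> h \<sigma> F G \<mu> N j k \<ge> (1 - h * K) * (real_of_int i * \<rho> - real_of_int j * \<rho>)"
      if "j \<le> i" for s i j k
    proof (rule Phi_gap[OF \<phi>_moll e r h _ _ that])
      show "vgrid \<rho> h \<sigma> F G \<mu> N k (q+1) + vgrid \<rho> h \<sigma> F G \<mu> N k (q-1) - 2 * vgrid \<rho> h \<sigma> F G \<mu> N k q
            \<le> (CG' + real (N - k) * h * CF') * \<rho>^2" for q
        unfolding vgrid_def using vp[of "N - k"] by blast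
      have "real (N - k) * h \<le> real N * h" using h by (intro mult_right_mono) auto
      then have "real (N - k) * h * CF' \<le> T * CF'" using TN CF'0 by (intro mult_right_mono) auto
      then show "CG' + real (N - k) * h * CF' \<le> K" unfolding K_def by simp
    qed
    have absgap: "\<bar>Phi s \<phi> \<epsilon> \<rho> h \<sigma> F G \<mu> N i k - Phi s \<phi> \<epsilon> \<rho> h \<sigma> F G \<mu> N j k\<bar> \<ge> (1 - h * K) * \<bar>real_of_int i * \<rho> - real_of_int j * \<rho>\<bar>" for s i j k
    proof (cases "j \<le> i")
      case True
      have "real_of_int j * \<rho> \<le> real_of_int i * \<rho>" using True r by (intro mult_right_mono) auto
      then show ?thesis using gap[OF True, of s k] by simp
    next
      case False
      then have ji: "i \<le> j" by simp
      have "real_of_int i * \<rho> \<le> real_of_int j * \<rho>" using ji r by (intro mult_right_mono) auto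
      then show ?thesis using gap[OF ji, of s k] by simp
    qed
    have sq: "\<bar>Phi s \<phi> \<epsilon> \<rho> h \<sigma> F G \<mu> N i k - Phi s \<phi> \<epsilon> \<rho> h \<sigma> F G \<mu> N j k\<bar>\<^sup>2 \<ge> (1 - c * h) * \<bar>real_of_int i * \<rho> - real_of_int j * \<rho>\<bar>\<^sup>2" for s i j k
    proof -
      define A where "A = \<bar>Phi s \<phi> \<epsilon> \<rho> h \<sigma> F G \<mu> N i k - Phi s \<phi> \<epsilon> \<rho> h \<sigma> F G \<mu> N j k\<bar>"
      define D where "D = \<bar>real_of_int i * \<rho> - real_of_int j * \<rho>\<bar>"
      have a: "(1 - h * K) * D \<le> A" unfolding A_def D_def by (rule absgap)
      have d0: "0 \<le> (1 - h * K) * D" unfolding D_def using hK by simp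
      have "((1 - h * K) * D)\<^sup>2 \<le> A\<^sup>2" using a d0 by (intro power_mono) auto
      moreover have "(1 - c * h) * D\<^sup>2 \<le> ((1 - h * K) * D)\<^sup>2"
      proof -
        have "((1 - h * K) * D)\<^sup>2 = (1 - c * h) * D\<^sup>2 + (h * K)\<^sup>2 * D\<^sup>2"
          unfolding c_def by (simp add: power2_eq_square algebra_simps)
        then show ?thesis by simp
      qed
      ultimately show ?thesis unfolding A_def D_def by simp
    qed
    have sums: "(\<lambda>j. hat \<rho> i (Phi s \<phi> \<epsilon> \<rho> h \<sigma> F G \<mu> N j k)) summable_on UNIV \<and>
        infsum (\<lambda>j. hat \<rho> i (Phi s \<phi> \<epsilon> \<rho> h \<sigma> F G \<mu> N j k)) UNIV \<le> 1 + 2 * (1 - (1 - h * K))" for s i k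
    proof -
      define z where "z j = Phi s \<phi> \<epsilon> \<rho> h \<sigma> F G \<mu> N j k / \<rho> - real_of_int i" for j
      have hz: "(\<lambda>j. hat \<rho> i (Phi s \<phi> \<epsilon> \<rho> h \<sigma> F G \<mu> N j k)) = (\<lambda>j. max 0 (1 - \<bar>z j\<bar>))"
        unfolding z_def using hat_alt[OF r] by auto
      have zg: "z (j+1) - z j \<ge> 1 - h * K" for j
      proof -
        have "(1 - h * K) * (real_of_int (j+1) * \<rho> - real_of_int j * \<rho>) \<le> Phi s \<phi> \<epsilon> \<rho> h \<sigma> F G \<mu> N (j+1) k - Phi s \<phi> \<epsilon> \<rho> h \<sigma> F G \<mu> N j k"
          by (rule gap) simp
        then have "(1 - h * K) * \<rho> \<le> Phi s \<phi> \<epsilon> \<rho> h \<sigma> F G \<mu> N (j+1) k - Phi s \<phi> \<epsilon> \<rho> h \<sigma> F G \<mu> N j k"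
          by (simp add: algebra_simps)
        then have "(1 - h * K) * \<rho> / \<rho> \<le> (Phi s \<phi> \<epsilon> \<rho> h \<sigma> F G \<mu> N (j+1) k - Phi s \<phi> \<epsilon> \<rho> h \<sigma> F G \<mu> N j k) / \<rho>"
          using r by (intro divide_right_mono) auto
        then show ?thesis unfolding z_def using r by (simp add: diff_divide_distrib)
      qed
      show ?thesis unfolding hz by (rule hat_sum_bound[of "1 - h * K" z, OF zg]) (use hK hK0 in auto)
    qed
    show "(\<forall>i j::int. \<forall>k<Ns n.
        min (\<bar>Phi 1 \<phi> (\<epsilon>s n) (\<rho>s n) (hs n) \<sigma> F G \<mu> (Ns n) i k
              - Phi 1 \<phi> (\<epsilon>s n) (\<rho>s n) (hs n) \<sigma> F G \<mu> (Ns n) j k\<bar>\<^sup>2)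
            (\<bar>Phi (-1) \<phi> (\<epsilon>s n) (\<rho>s n) (hs n) \<sigma> F G \<mu> (Ns n) i k
              - Phi (-1) \<phi> (\<epsilon>s n) (\<rho>s n) (hs n) \<sigma> F G \<mu> (Ns n) j k\<bar>\<^sup>2)
        \<ge> (1 - c * hs n) * \<bar>real_of_int i * \<rho>s n - real_of_int j * \<rho>s n\<bar>\<^sup>2) \<and>
     (\<forall>i::int. \<forall>k<Ns n.
        (\<lambda>j. hat (\<rho>s n) i (Phi 1 \<phi> (\<epsilon>s n) (\<rho>s n) (hs n) \<sigma> F G \<mu> (Ns n) j k)
             + hat (\<rho>s n) i (Phi (-1) \<phi> (\<epsilon>s n) (\<rho>s n) (hs n) \<sigma> F G \<mu> (Ns n) j k))
          summable_on UNIV \<and>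
        infsum (\<lambda>j. hat (\<rho>s n) i (Phi 1 \<phi> (\<epsilon>s n) (\<rho>s n) (hs n) \<sigma> F G \<mu> (Ns n) j k)
             + hat (\<rho>s n) i (Phi (-1) \<phi> (\<epsilon>s n) (\<rho>s n) (hs n) \<sigma> F G \<mu> (Ns n) j k)) UNIV / 2
          \<le> 1 + c * hs n)"
      unfolding \<rho>_def[symmetric] h_def[symmetric] \<epsilon>_def[symmetric] N_def[symmetric]
    proof (intro conjI allI impI)
      fix i j :: int and k assume "k < N"
      show "min (\<bar>Phi 1 \<phi> \<epsilon> \<rho> h \<sigma> F G \<mu> N i k - Phi 1 \<phi> \<epsilon> \<rho> h \<sigma> F G \<mu> N j k\<bar>\<^sup>2)
            (\<bar>Phi (-1) \<phi> \<epsilon> \<rho> h \<sigma> F G \<mu> N i k - Phi (-1) \<phi> \<epsilon> \<rho> h \<sigma> F G \<mu> N j k\<bar>\<^sup>2)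
        \<ge> (1 - c * h) * \<bar>real_of_int i * \<rho> - real_of_int j * \<rho>\<bar>\<^sup>2"
        using sq[of i j 1 k] sq[of i j "-1" k] by simp
    next
      fix i :: int and k assume "k < N"
      have s1: "(\<lambda>j. hat \<rho> i (Phi 1 \<phi> \<epsilon> \<rho> h \<sigma> F G \<mu> N j k)) summable_on UNIV"
        and b1: "infsum (\<lambda>j. hat \<rho> i (Phi 1 \<phi> \<epsilon> \<rho> h \<sigma> F G \<mu> N j k)) UNIV \<le> 1 + 2 * (1 - (1 - h * K))"
        using sums[of i 1 k] by auto
      have s2: "(\<lambda>j. hat \<rho> i (Phi (-1) \<phi> \<epsilon> \<rho> h \<sigma> F G \<mu> N j k)) summable_on UNIV"
        and b2: "infsum (\<lambda>j. hat \<rho> i (Phi (-1) \<phi> \<epsilon> \<rho> h \<sigma> F G \<mu> N j k)) UNIV \<le> 1 + 2 * (1 - (1 - h * K))"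
        using sums[of i "-1" k] by auto
      show "(\<lambda>j. hat \<rho> i (Phi 1 \<phi> \<epsilon> \<rho> h \<sigma> F G \<mu> N j k) + hat \<rho> i (Phi (-1) \<phi> \<epsilon> \<rho> h \<sigma> F G \<mu> N j k)) summable_on UNIV"
        by (rule summable_on_add[OF s1 s2])
      have "infsum (\<lambda>j. hat \<rho> i (Phi 1 \<phi> \<epsilon> \<rho> h \<sigma> F G \<mu> N j k) + hat \<rho> i (Phi (-1) \<phi> \<epsilon> \<rho> h \<sigma> F G \<mu> N j k)) UNIV
          = infsum (\<lambda>j. hat \<rho> i (Phi 1 \<phi> \<epsilon> \<rho> h \<sigma> F G \<mu> N j k)) UNIV + infsum (\<lambda>j. hat \<rho> i (Phi (-1) \<phi> \<epsilon> \<rho> h \<sigma> F G \<mu> N j k)) UNIV"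
        by (rule infsum_add[OF s1 s2])
      then show "infsum (\<lambda>j. hat \<rho> i (Phi 1 \<phi> \<epsilon> \<rho> h \<sigma> F G \<mu> N j k) + hat \<rho> i (Phi (-1) \<phi> \<epsilon> \<rho> h \<sigma> F G \<mu> N j k)) UNIV / 2
          \<le> 1 + c * h"
        using b1 b2 unfolding c_def by (simp add: field_simps)
    qed
  qed
qed


end
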